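(* For every pair $(k,\ell)$ of positive integers and every prime power $q$, there is a constant $f(k,\ell,q)$ such that every simple, cosimple, $GF(q)$-representable $(k,\ell)$-uniform matroid $M$ satisfies $r(M)\leq f(k,\ell,q)$. Moreover, taking $f(k,\ell,q)$ to be the maximum rank of such a matroid, if $k\geq 2$ then $$f(k,\ell,q)\leq \max\{f(k-1,\ell+1,q),\ f(1,\ell,q)+(k-1)\}.$$
   Context: For positive integers $k,\ell$, a matroid is $(k,\ell)$-uniform if it has no minor isomorphic to $U_{k,k}\oplus U_{0,\ell}$. A matroid is cosimple if its dual is simple. *)

theory Defs
  imports "HOL-Algebra.Ring" "HOL-Computational_Algebra.Primes"
begin

definition matroid :: "'a set \<Rightarrow> ('a set \<Rightarrow> bool) \<Rightarrow> bool" where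
  "matroid E I \<longleftrightarrow> finite E \<and> I {} \<and> (\<forall>X. I X \<longrightarrow> X \<subseteq> E)
     \<and> (\<forall>X Y. I Y \<and> X \<subseteq> Y \<longrightarrow> I X)
     \<and> (\<forall>X Y. I X \<and> I Y \<and> card X < card Y \<longrightarrow> (\<exists>y\<in>Y - X. I (insert y X)))"

definition basis_of :: "('a set \<Rightarrow> bool) \<Rightarrow> 'a set \<Rightarrow> 'a set \<Rightarrow> bool" where
  "basis_of I C B \<longleftrightarrow> B \<subseteq> C \<and> I B \<and> (\<forall>x\<in>C - B. \<not> I (insert x B))"

definition matroid_rank :: "'a set \<Rightarrow> ('a set \<Rightarrow> bool) \<Rightarrow> nat" where
  "matroid_rank E I = Max (card ` {X. X \<subseteq> E \<and> I X})"

definition dual_indep :: "'a set \<Rightarrow> ('a set \<Rightarrow> bool) \<Rightarrow> 'a set \<Rightarrow> bool" where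
  "dual_indep E I X \<longleftrightarrow> X \<subseteq> E \<and> (\<exists>B. basis_of I E B \<and> X \<inter> B = {})"

text \<open>Simple: no loops and no parallel pairs, i.e. every set of at most two elements is independent.\<close>
definition simple_matroid :: "'a set \<Rightarrow> ('a set \<Rightarrow> bool) \<Rightarrow> bool" where
  "simple_matroid E I \<longleftrightarrow> (\<forall>x\<in>E. \<forall>y\<in>E. I {x, y})"

definition cosimple_matroid :: "'a set \<Rightarrow> ('a set \<Rightarrow> bool) \<Rightarrow> bool" where
  "cosimple_matroid E I \<longleftrightarrow> simple_matroid E (dual_indep E I)"

text \<open>Independent sets of the minor M / C \ D (C, D disjoint subsets of E):
  X \<subseteq> E - (C \<union> D) is independent iff X \<union> B is independent for a basis B of C.\<close>
definition minor_indep :: "('a set \<Rightarrow> bool) \<Rightarrow> 'a set \<Rightarrow> 'a set \<Rightarrow> 'a set \<Rightarrow> bool" where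
  "minor_indep I C D X \<longleftrightarrow> X \<inter> (C \<union> D) = {} \<and> (\<exists>B. basis_of I C B \<and> I (X \<union> B))"

text \<open>M has a minor isomorphic to U_{k,k} \<oplus> U_{0,l}: a minor whose ground set splits into
  a k-set A and an l-set L such that the independent sets are exactly the subsets of A.\<close>
definition has_Ukk_U0l_minor :: "'a set \<Rightarrow> ('a set \<Rightarrow> bool) \<Rightarrow> nat \<Rightarrow> nat \<Rightarrow> bool" where
  "has_Ukk_U0l_minor E I k l \<longleftrightarrow>
     (\<exists>C D A L. C \<subseteq> E \<and> D \<subseteq> E \<and> C \<inter> D = {} \<and> A \<inter> L = {} \<and> A \<union> L = E - (C \<union> D)
        \<and> card A = k \<and> card L = l
        \<and> (\<forall>X. X \<subseteq> E - (C \<union> D) \<longrightarrow> (minor_indep I C D X \<longleftrightarrow> X \<subseteq> A)))"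

definition kl_uniform :: "'a set \<Rightarrow> ('a set \<Rightarrow> bool) \<Rightarrow> nat \<Rightarrow> nat \<Rightarrow> bool" where
  "kl_uniform E I k l \<longleftrightarrow> \<not> has_Ukk_U0l_minor E I k l"

definition lin_indep_over :: "('b, 'c) ring_scheme \<Rightarrow> nat \<Rightarrow> ('a \<Rightarrow> nat \<Rightarrow> 'b) \<Rightarrow> 'a set \<Rightarrow> bool" where
  "lin_indep_over R n phi X \<longleftrightarrow>
     (\<forall>c. c \<in> X \<rightarrow> carrier R \<longrightarrow>
        (\<forall>i<n. (\<Oplus>\<^bsub>R\<^esub> x\<in>X. c x \<otimes>\<^bsub>R\<^esub> phi x i) = \<zero>\<^bsub>R\<^esub>) \<longrightarrow> (\<forall>x\<in>X. c x = \<zero>\<^bsub>R\<^esub>))"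

definition representable_over :: "('b, 'c) ring_scheme \<Rightarrow> 'a set \<Rightarrow> ('a set \<Rightarrow> bool) \<Rightarrow> bool" where
  "representable_over R E I \<longleftrightarrow>
     (\<exists>n phi. (\<forall>x\<in>E. \<forall>i<n. phi x i \<in> carrier R) \<and> (\<forall>X. X \<subseteq> E \<longrightarrow> (I X \<longleftrightarrow> lin_indep_over R n phi X)))"

text \<open>GF(q)-representable: representable over some field with q elements (every finite field is
  isomorphic to one whose carrier is a set of naturals).\<close>
definition GF_representable :: "nat \<Rightarrow> 'a set \<Rightarrow> ('a set \<Rightarrow> bool) \<Rightarrow> bool" where
  "GF_representable q E I \<longleftrightarrow>
     (\<exists>R :: nat ring. field R \<and> finite (carrier R) \<and> card (carrier R) = q \<and> representable_over R E I)"

definition prime_power :: "nat \<Rightarrow> bool" where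
  "prime_power q \<longleftrightarrow> (\<exists>p m. prime p \<and> m \<ge> 1 \<and> q = p ^ m)"

text \<open>The matroids considered (on ground sets of naturals, which covers all matroids up to isomorphism).\<close>
definition good_matroid :: "nat \<Rightarrow> nat \<Rightarrow> nat \<Rightarrow> 'a set \<Rightarrow> ('a set \<Rightarrow> bool) \<Rightarrow> bool" where
  "good_matroid k l q E I \<longleftrightarrow> matroid E I \<and> simple_matroid E I \<and> cosimple_matroid E I
     \<and> GF_representable q E I \<and> kl_uniform E I k l"

definition fmax :: "nat \<Rightarrow> nat \<Rightarrow> nat \<Rightarrow> nat" where
  "fmax k l q = Sup {matroid_rank E I | (E :: nat set) I. good_matroid k l q E I}"

end

theory Submission imports Defs begin

locale mat =
  fixes E :: "'a set" and I :: "'a set \<Rightarrow> bool"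
  assumes M: "matroid E I"
begin

lemma fin: "finite E" using M unfolding matroid_def by blast
lemma indep_sub: "I X \<Longrightarrow> X \<subseteq> E" using M unfolding matroid_def by blast
lemma indep_mono: "I Y \<Longrightarrow> X \<subseteq> Y \<Longrightarrow> I X" using M unfolding matroid_def by blast
lemma indep_empty: "I {}" using M unfolding matroid_def by blast
lemma aug_ax: "I X \<Longrightarrow> I Y \<Longrightarrow> card X < card Y \<Longrightarrow> \<exists>y\<in>Y-X. I (insert y X)"
  using M unfolding matroid_def by blast
lemma indep_finite: "I X \<Longrightarrow> finite X" using fin indep_sub finite_subset by blast

lemma rank_fin: "finite (card ` {X. X \<subseteq> E \<and> I X})"
  using fin by auto

lemma rank_upper: "I X \<Longrightarrow> card X \<le> matroid_rank E I"
  unfolding matroid_rank_def using rank_fin indep_sub by (intro Max_ge) auto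

lemma rank_attained: "\<exists>B. I B \<and> card B = matroid_rank E I"
proof -
  have "matroid_rank E I \<in> card ` {X. X \<subseteq> E \<and> I X}"
    unfolding matroid_rank_def using rank_fin indep_empty by (intro Max_in) auto
  then show ?thesis by auto
qed

lemma rank_eqI: "I X \<Longrightarrow> (\<And>Y. I Y \<Longrightarrow> card Y \<le> card X) \<Longrightarrow> matroid_rank E I = card X"
  using rank_upper rank_attained by (metis le_antisym)

lemma aug: "I J \<Longrightarrow> card J + j \<le> matroid_rank E I \<Longrightarrow> \<exists>A. A \<inter> J = {} \<and> card A = j \<and> I (J \<union> A)"
proof (induction j)
  case 0
  then show ?case by (intro exI[of _ "{}"]) auto
next
  case (Suc j)
  then obtain A where A: "A \<inter> J = {}" "card A = j" "I (J \<union> A)" by auto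
  obtain B where B: "I B" "card B = matroid_rank E I" using rank_attained by auto
  have "finite (J \<union> A)" using A(3) indep_finite by blast
  then have fA: "finite A" "finite J" by auto
  have "card (J \<union> A) = card J + j" using card_Un_disjoint[OF fA(2) fA(1)] A by (simp add: Int_commute)
  then have "card (J \<union> A) < card B" using Suc.prems B by auto
  then obtain y where y: "y \<in> B - (J \<union> A)" "I (insert y (J \<union> A))" using aug_ax A(3) B(1) by blast
  show ?case
    apply (intro exI[of _ "insert y A"])
    using A y fA by auto
qed

lemma cl_bound:
  assumes "I K" "I J" "\<forall>x\<in>J. x \<in> K \<or> \<not> I (insert x K)"
  shows "card J \<le> card K"
proof (rule ccontr)
  assume "\<not> ?thesis"
  then obtain y where "y \<in> J - K" "I (insert y K)" using aug_ax assms by (meson not_le)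
  then show False using assms by auto
qed

lemma basis_card: "basis_of I E B \<Longrightarrow> card B = matroid_rank E I"
proof -
  assume b: "basis_of I E B"
  then have "I B" unfolding basis_of_def by auto
  obtain B0 where B0: "I B0" "card B0 = matroid_rank E I" using rank_attained by auto
  show ?thesis
  proof (rule ccontr)
    assume "card B \<noteq> matroid_rank E I"
    then have "card B < card B0" using rank_upper[OF \<open>I B\<close>] B0 by auto
    then obtain y where "y \<in> B0 - B" "I (insert y B)" using aug_ax \<open>I B\<close> B0 by blast
    then show False using b indep_sub[OF B0(1)] unfolding basis_of_def by auto
  qed
qed

lemma exists_basis_sub:
  assumes "S \<subseteq> E"
  shows "\<exists>C. C \<subseteq> S \<and> I C \<and> (\<forall>x\<in>S-C. \<not> I (insert x C))"
proof -
  let ?F = "{C. C \<subseteq> S \<and> I C}"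
  have "finite S" using assms fin finite_subset by blast
  have "?F \<subseteq> Pow S" by auto
  then have ff: "finite ?F" using \<open>finite S\<close> by (simp add: finite_subset)
  have ne: "{} \<in> ?F" using indep_empty by auto
  have "Max (card ` ?F) \<in> card ` ?F" using ff ne by (intro Max_in) auto
  then obtain C where C1: "C \<in> ?F" "card C = Max (card ` ?F)" by auto
  have C2: "\<forall>D\<in>?F. card D \<le> card C" unfolding C1(2) using ff by (auto intro!: Max_ge)
  note C = C1(1) C2
  have fC: "finite C" using C(1) indep_finite by auto
  show ?thesis
  proof (intro exI[of _ C] conjI ballI)
    fix x assume x: "x \<in> S - C"
    show "\<not> I (insert x C)"
    proof
      assume "I (insert x C)"
      then have "insert x C \<in> ?F" using x C(1) by auto
      then have "card (insert x C) \<le> card C" using C(2) by blast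
      then show False using x fC by auto
    qed
  qed (use C in auto)
qed

lemma basis_of_indep: "I C \<Longrightarrow> basis_of I C B \<longleftrightarrow> B = C"
  unfolding basis_of_def using indep_mono by blast

definition wit where
  "wit k l C A L \<longleftrightarrow> I (C \<union> A) \<and> C \<inter> A = {} \<and> card A = k \<and> L \<subseteq> E - (C \<union> A) \<and> card L = l
     \<and> (\<forall>e\<in>L. \<not> I (insert e C))"

lemma wit_iff: "has_Ukk_U0l_minor E I k l \<longleftrightarrow> (\<exists>C A L. wit k l C A L)"
proof
  assume "has_Ukk_U0l_minor E I k l"
  then obtain C D A L where h: "C \<subseteq> E" "D \<subseteq> E" "C \<inter> D = {}" "A \<inter> L = {}" "A \<union> L = E - (C \<union> D)"
    "card A = k" "card L = l" "\<forall>X. X \<subseteq> E - (C \<union> D) \<longrightarrow> (minor_indep I C D X \<longleftrightarrow> X \<subseteq> A)"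
    unfolding has_Ukk_U0l_minor_def by blast
  have "A \<subseteq> E - (C \<union> D)" using h(5) by blast
  then have "minor_indep I C D A" using h(8) by blast
  then obtain B where B: "basis_of I C B" "I (A \<union> B)" unfolding minor_indep_def by auto
  have BC: "B \<subseteq> C" using B unfolding basis_of_def by auto
  have "\<forall>e\<in>L. \<not> I (insert e B)"
  proof (intro ballI notI)
    fix e assume e: "e \<in> L" "I (insert e B)"
    have "{e} \<subseteq> E - (C \<union> D)" using e h by auto
    moreover have "\<not> {e} \<subseteq> A" using e h by auto
    moreover have "minor_indep I C D {e}" unfolding minor_indep_def
      using B(1) e(2) \<open>{e} \<subseteq> E - (C \<union> D)\<close> by auto
    ultimately show False using h(8) by blast
  qed
  moreover have "I (B \<union> A)" using B(2) by (simp add: Un_commute)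
  ultimately have "wit k l B A L" unfolding wit_def using BC h(1-7) by auto
  then show "\<exists>C A L. wit k l C A L" by blast
next
  assume "\<exists>C A L. wit k l C A L"
  then obtain C A L where w: "I (C \<union> A)" "C \<inter> A = {}" "card A = k" "L \<subseteq> E - (C \<union> A)" "card L = l"
     "\<forall>e\<in>L. \<not> I (insert e C)" unfolding wit_def by blast
  have IC: "I C" using w(1) indep_mono by blast
  have CAE: "C \<union> A \<subseteq> E" using w(1) indep_sub by blast
  define D where "D = E - (C \<union> A \<union> L)"
  have key: "minor_indep I C D X \<longleftrightarrow> X \<subseteq> A" if X: "X \<subseteq> E - (C \<union> D)" for X
  proof -
    have "minor_indep I C D X \<longleftrightarrow> I (X \<union> C)"
      unfolding minor_indep_def basis_of_indep[OF IC] using X by auto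
    also have "\<dots> \<longleftrightarrow> X \<subseteq> A"
    proof
      assume a: "I (X \<union> C)"
      show "X \<subseteq> A"
      proof
        fix e assume "e \<in> X"
        moreover have "X \<subseteq> A \<union> L" using X D_def by auto
        moreover have "I (insert e C)" if "e \<in> X" using a indep_mono that by blast
        ultimately show "e \<in> A" using w(6) by blast
      qed
    next
      assume "X \<subseteq> A" then show "I (X \<union> C)" using w(1) indep_mono by blast
    qed
    finally show ?thesis .
  qed
  have AL: "A \<union> L = E - (C \<union> D)"
  proof
    show "A \<union> L \<subseteq> E - (C \<union> D)" using w(2,4) CAE unfolding D_def by blast
    show "E - (C \<union> D) \<subseteq> A \<union> L" unfolding D_def by blast
  qed
  have "A \<inter> L = {}" using w(4) by blast
  moreover have "C \<subseteq> E" "D \<subseteq> E" "C \<inter> D = {}" using CAE unfolding D_def by auto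
  ultimately have H: "C \<subseteq> E \<and> D \<subseteq> E \<and> C \<inter> D = {} \<and> A \<inter> L = {} \<and> A \<union> L = E - (C \<union> D)
     \<and> card A = k \<and> card L = l \<and> (\<forall>X. X \<subseteq> E - (C \<union> D) \<longrightarrow> (minor_indep I C D X \<longleftrightarrow> X \<subseteq> A))"
    using AL w(3,5) key by simp
  show "has_Ukk_U0l_minor E I k l" unfolding has_Ukk_U0l_minor_def
    apply (rule exI)+ by (rule H)
qed

lemma Wk:
  assumes "kl_uniform E I k l" "I K" "card K + k \<le> matroid_rank E I" "L \<subseteq> E - K"
    "\<forall>x\<in>L. \<not> I (insert x K)"
  shows "card L < l"
proof (rule ccontr)
  assume "\<not> card L < l"
  moreover have "finite L" using assms(4) fin finite_subset by blast
  ultimately obtain L' where L': "L' \<subseteq> L" "card L' = l"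
    using obtain_subset_with_card_n by (metis not_less)
  obtain A where A: "A \<inter> K = {}" "card A = k" "I (K \<union> A)" using aug assms by blast
  have "A \<inter> L' = {}"
  proof -
    have "I (insert a K)" if "a \<in> A" for a using A(3) indep_mono that by blast
    then show ?thesis using assms(5) L' by blast
  qed
  then have "wit k l K A L'" unfolding wit_def using A L' assms by auto
  then show False using assms(1) wit_iff unfolding kl_uniform_def by blast
qed


lemma restr:
  assumes Z: "Z \<subseteq> E"
  shows "matroid Z (\<lambda>X. I X \<and> X \<subseteq> Z)"
proof -
  have a: "finite Z" using Z fin finite_subset by blast
  have b: "I {} \<and> {} \<subseteq> Z" using indep_empty by simp
  have c: "\<forall>X Y. (I Y \<and> Y \<subseteq> Z) \<and> X \<subseteq> Y \<longrightarrow> I X \<and> X \<subseteq> Z" using indep_mono by blast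
  have d: "\<forall>X Y. (I X \<and> X \<subseteq> Z) \<and> (I Y \<and> Y \<subseteq> Z) \<and> card X < card Y \<longrightarrow>
      (\<exists>y\<in>Y - X. I (insert y X) \<and> insert y X \<subseteq> Z)"
  proof (intro allI impI)
    fix X Y assume h: "(I X \<and> X \<subseteq> Z) \<and> (I Y \<and> Y \<subseteq> Z) \<and> card X < card Y"
    then have h': "I X" "I Y" "card X < card Y" "X \<subseteq> Z" "Y \<subseteq> Z" by auto
    obtain y where y: "y \<in> Y - X" "I (insert y X)" using aug_ax[OF h'(1-3)] by blast
    have "insert y X \<subseteq> Z" using y(1) h'(4,5) by blast
    then show "\<exists>y\<in>Y - X. I (insert y X) \<and> insert y X \<subseteq> Z" using y by blast
  qed
  have e: "\<forall>X. I X \<and> X \<subseteq> Z \<longrightarrow> X \<subseteq> Z" by blast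
  show ?thesis unfolding matroid_def by (intro conjI a b c d e)
qed

lemma P3:
  assumes U: "kl_uniform E I k l" and k: "k \<ge> 2" and nU: "\<not> kl_uniform E I (k - 1) (l + 1)"
    and sim: "simple_matroid E I"
  shows "\<exists>Z \<subseteq> E. matroid Z (\<lambda>X. I X \<and> X \<subseteq> Z) \<and> simple_matroid Z (\<lambda>X. I X \<and> X \<subseteq> Z)
    \<and> cosimple_matroid Z (\<lambda>X. I X \<and> X \<subseteq> Z) \<and> kl_uniform Z (\<lambda>X. I X \<and> X \<subseteq> Z) 1 l
    \<and> matroid_rank E I \<le> matroid_rank Z (\<lambda>X. I X \<and> X \<subseteq> Z) + (k - 1)"
proof -
  obtain C A L where w: "I (C \<union> A)" "C \<inter> A = {}" "card A = k - 1" "L \<subseteq> E - (C \<union> A)" "card L = l + 1"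
     "\<forall>e\<in>L. \<not> I (insert e C)"
    using nU wit_iff unfolding kl_uniform_def wit_def by blast
  have IC: "I C" using w(1) indep_mono by blast
  have fC: "finite C" using IC by (rule indep_finite)
  have fA: "finite A" using w(1) indep_finite finite_subset by blast
  have CE: "C \<subseteq> E" using IC by (rule indep_sub)
  define Z where "Z = C \<union> L"
  define IZ where "IZ = (\<lambda>X. I X \<and> X \<subseteq> Z)"
  have ZE: "Z \<subseteq> E" unfolding Z_def using CE w(4) by blast
  have CL: "C \<inter> L = {}" using w(4) by blast
  have fL: "finite L" using w(4) fin finite_subset by blast
  have cZ: "card Z = card C + (l + 1)" unfolding Z_def using CL fC fL w(5) by (simp add: card_Un_disjoint)
  have mZ: "matroid Z IZ" unfolding IZ_def using ZE by (rule restr)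
  interpret N: mat Z IZ using mZ by unfold_locales
  have clZ: "card Y \<le> card C" if "I Y" "Y \<subseteq> Z" for Y
    using cl_bound[OF IC that(1)] that(2) w(6) unfolding Z_def by blast
  have rkN: "matroid_rank Z IZ = card C"
    using N.rank_eqI[of C] clZ IC unfolding IZ_def Z_def by auto
  have rM: "card C + (k - 1) \<le> matroid_rank E I"
  proof -
    have "card (C \<union> A) = card C + (k - 1)" using w(2,3) fC fA by (simp add: card_Un_disjoint)
    then show ?thesis using rank_upper[OF w(1)] by simp
  qed
  have rM2: "matroid_rank E I \<le> card C + (k - 1)"
  proof (rule ccontr)
    assume "\<not> ?thesis"
    then have "card C + k \<le> matroid_rank E I" using k by simp
    then have "card L < l" using Wk[OF U IC _ _ w(6)] w(4) by blast
    then show False using w(5) by simp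
  qed
  have simZ: "simple_matroid Z IZ"
    using sim ZE unfolding simple_matroid_def IZ_def by blast
  have unZ: "kl_uniform Z IZ 1 l"
  proof (unfold kl_uniform_def, rule notI)
    assume "has_Ukk_U0l_minor Z IZ 1 l"
    then obtain C' A' L' where w': "IZ (C' \<union> A')" "C' \<inter> A' = {}" "card A' = 1" "L' \<subseteq> Z - (C' \<union> A')"
      "card L' = l" "\<forall>e\<in>L'. \<not> IZ (insert e C')"
      using N.wit_iff unfolding N.wit_def by blast
    have IC': "I C'" "C' \<subseteq> Z" using w'(1) indep_mono unfolding IZ_def by blast+
    have fC': "finite C'" using IC' indep_finite by blast
    have fA': "finite A'" using w'(3) card_ge_0_finite by force
    have "card (C' \<union> A') \<le> card C" using w'(1) N.rank_upper rkN by metis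
    then have "card C' + 1 \<le> card C" using w'(2,3) fC' fA' by (simp add: card_Un_disjoint)
    then have c1: "card C' + k \<le> matroid_rank E I" using rM k by simp
    have "\<forall>e\<in>L'. \<not> I (insert e C')"
      using w'(6) w'(4) IC'(2) unfolding IZ_def by blast
    then have "card L' < l" using Wk[OF U IC'(1) c1] w'(4) ZE by blast
    then show False using w'(5) by simp
  qed
  have cosZ: "cosimple_matroid Z IZ"
    unfolding cosimple_matroid_def simple_matroid_def
  proof (intro ballI)
    fix x y assume xy: "x \<in> Z" "y \<in> Z"
    define S where "S = Z - {x, y}"
    have SE: "S \<subseteq> E" unfolding S_def using ZE by blast
    obtain C'' where C'': "C'' \<subseteq> S" "I C''" "\<forall>z\<in>S - C''. \<not> I (insert z C'')"
      using exists_basis_sub[OF SE] by blast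
    have fC'': "finite C''" using C''(2) indep_finite by blast
    show "dual_indep Z IZ {x, y}"
    proof (cases "card C \<le> card C''")
      case True
      have "basis_of IZ Z C''" unfolding basis_of_def
      proof (intro conjI ballI)
        show "C'' \<subseteq> Z" using C''(1) unfolding S_def by blast
        then show "IZ C''" using C''(2) unfolding IZ_def by simp
        fix z assume z: "z \<in> Z - C''"
        show "\<not> IZ (insert z C'')"
        proof
          assume "IZ (insert z C'')"
          then have "card (insert z C'') \<le> card C" using N.rank_upper rkN by metis
          then show False using True z fC'' by simp
        qed
      qed
      moreover have "{x, y} \<inter> C'' = {}" using C''(1) unfolding S_def by blast
      ultimately show ?thesis unfolding dual_indep_def using xy by blast
    next
      case False
      have "card {x, y} \<le> 2" by (simp add: card_insert_le_m1)
      moreover have "card S = card Z - card {x, y}" unfolding S_def using xy by (intro card_Diff_subset) auto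
      ultimately have cS: "card S + 2 \<ge> card Z" by simp
      have fS: "finite S" using SE fin finite_subset by blast
      have cL: "card (S - C'') = card S - card C''" using C''(1) fC'' by (simp add: card_Diff_subset)
      have "card C'' \<le> card S" using C''(1) fS card_mono by blast
      then have "card (S - C'') \<ge> l" using cL cS cZ False by simp
      moreover have "card (S - C'') < l"
      proof (rule Wk[OF U C''(2)])
        show "card C'' + k \<le> matroid_rank E I" using False rM k by simp
        show "S - C'' \<subseteq> E - C''" using SE by blast
        show "\<forall>x\<in>S - C''. \<not> I (insert x C'')" using C''(3) .
      qed
      ultimately show ?thesis by simp
    qed
  qed
  show ?thesis
    apply (rule exI[of _ Z])
    using ZE mZ simZ cosZ unZ rM2 rkN unfolding IZ_def by simp
qed

end


context field begin
lemma alg1: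
  assumes "a \<in> carrier R" "b \<in> carrier R" "p \<in> carrier R" "s1 \<in> carrier R" "s2 \<in> carrier R"
    "\<alpha> \<in> carrier R" "\<beta> \<in> carrier R"
  shows "(\<alpha> \<otimes> a \<oplus> \<beta> \<otimes> b) \<otimes> p \<oplus> (\<alpha> \<otimes> s1 \<oplus> \<beta> \<otimes> s2) = \<alpha> \<otimes> (a \<otimes> p \<oplus> s1) \<oplus> \<beta> \<otimes> (b \<otimes> p \<oplus> s2)"
  using assms by (simp add: l_distr r_distr m_assoc a_ac)

lemma h1: "u \<in> carrier R \<Longrightarrow> v \<in> carrier R \<Longrightarrow> \<one> \<otimes> u \<oplus> \<ominus> \<one> \<otimes> v = \<zero> \<Longrightarrow> u = v"
proof -
  assume a: "u \<in> carrier R" "v \<in> carrier R" "\<one> \<otimes> u \<oplus> \<ominus> \<one> \<otimes> v = \<zero>"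
  have "u = (\<one> \<otimes> u \<oplus> \<ominus> \<one> \<otimes> v) \<oplus> v" using a(1,2) by algebra
  then show "u = v" using a by simp
qed

lemma h2: "p \<in> carrier R \<Longrightarrow> \<one> \<otimes> p \<oplus> \<ominus> \<one> \<otimes> p = \<zero>"
  by algebra

lemma h3: "p \<in> carrier R \<Longrightarrow> q \<in> carrier R \<Longrightarrow> \<beta> \<in> carrier R \<Longrightarrow>
  \<one> \<otimes> p \<oplus> (\<ominus> \<beta> \<otimes> q \<oplus> (\<ominus> \<one> \<otimes> p \<oplus> \<beta> \<otimes> q)) = \<zero>"
  by algebra

lemma h4: "u \<in> carrier R \<Longrightarrow> \<beta> \<in> carrier R \<Longrightarrow> \<ominus> \<one> \<otimes> (\<beta> \<otimes> u) \<oplus> \<beta> \<otimes> u = \<zero>"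
  by algebra

lemma h5: "u \<in> carrier R \<Longrightarrow> \<alpha> \<in> carrier R \<Longrightarrow> \<alpha> \<noteq> \<zero> \<Longrightarrow> u = (u \<otimes> inv \<alpha>) \<otimes> \<alpha>"
proof -
  assume a: "u \<in> carrier R" "\<alpha> \<in> carrier R" "\<alpha> \<noteq> \<zero>"
  then have U: "\<alpha> \<in> Units R" using field_Units by blast
  then have "inv \<alpha> \<in> carrier R" by (rule Units_inv_closed)
  then have "(u \<otimes> inv \<alpha>) \<otimes> \<alpha> = u \<otimes> (inv \<alpha> \<otimes> \<alpha>)" using a by (simp add: m_assoc)
  also have "\<dots> = u" using U a by simp
  finally show ?thesis by simp
qed

end

locale rep = mat E I + field R
  for E :: "'a set" and I and R :: "('b, 'c) ring_scheme" (structure) +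
  fixes n :: nat and phi :: "'a \<Rightarrow> nat \<Rightarrow> 'b"
  assumes carr: "\<And>x i. x \<in> E \<Longrightarrow> i < n \<Longrightarrow> phi x i \<in> carrier R"
  and rep: "\<And>X. X \<subseteq> E \<Longrightarrow> I X \<longleftrightarrow> lin_indep_over R n phi X"
begin

lemma PiC: "c \<in> X \<rightarrow> carrier R \<Longrightarrow> X \<subseteq> E \<Longrightarrow> i < n \<Longrightarrow> (\<lambda>y. c y \<otimes> phi y i) \<in> X \<rightarrow> carrier R"
proof (rule Pi_I)
  fix y assume "c \<in> X \<rightarrow> carrier R" "X \<subseteq> E" "i < n" "y \<in> X"
  then have "c y \<in> carrier R" "phi y i \<in> carrier R" using carr by auto
  then show "c y \<otimes> phi y i \<in> carrier R" by simp
qed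

lemma LC2:
  assumes "finite X" "X \<subseteq> E" "a \<in> X \<rightarrow> carrier R" "b \<in> X \<rightarrow> carrier R"
    "\<alpha> \<in> carrier R" "\<beta> \<in> carrier R" "i < n"
  shows "(\<Oplus>x\<in>X. (\<alpha> \<otimes> a x \<oplus> \<beta> \<otimes> b x) \<otimes> phi x i)
    = \<alpha> \<otimes> (\<Oplus>x\<in>X. a x \<otimes> phi x i) \<oplus> \<beta> \<otimes> (\<Oplus>x\<in>X. b x \<otimes> phi x i)"
  using assms
proof (induction X rule: finite_induct)
  case empty
  then show ?case by simp
next
  case (insert y F)
  have yE: "y \<in> E" "F \<subseteq> E" using insert(4) by auto
  have c: "a y \<in> carrier R" "b y \<in> carrier R" "phi y i \<in> carrier R"
    using insert(5,6) carr[OF yE(1) insert(9)] by auto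
  have ab: "\<And>x. x \<in> F \<Longrightarrow> a x \<in> carrier R \<and> b x \<in> carrier R \<and> phi x i \<in> carrier R"
    using insert(5,6) carr yE(2) insert(9) by blast
  have f1: "(\<lambda>x. (\<alpha> \<otimes> a x \<oplus> \<beta> \<otimes> b x) \<otimes> phi x i) \<in> F \<rightarrow> carrier R"
    using ab insert(7,8) by (intro Pi_I) auto
  have f2: "(\<lambda>x. a x \<otimes> phi x i) \<in> F \<rightarrow> carrier R" "(\<lambda>x. b x \<otimes> phi x i) \<in> F \<rightarrow> carrier R"
    using ab by (auto intro!: Pi_I)
  have IH: "(\<Oplus>x\<in>F. (\<alpha> \<otimes> a x \<oplus> \<beta> \<otimes> b x) \<otimes> phi x i)
    = \<alpha> \<otimes> (\<Oplus>x\<in>F. a x \<otimes> phi x i) \<oplus> \<beta> \<otimes> (\<Oplus>x\<in>F. b x \<otimes> phi x i)"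
    using insert by auto
  have s1: "(\<Oplus>x\<in>F. a x \<otimes> phi x i) \<in> carrier R" "(\<Oplus>x\<in>F. b x \<otimes> phi x i) \<in> carrier R"
    using f2 by (auto intro: finsum_closed)
  show ?case
    apply (subst finsum_insert[OF insert(1,2) f1])
    subgoal using c insert by simp
    apply (subst finsum_insert[OF insert(1,2) f2(1)])
    subgoal using c by simp
    apply (subst finsum_insert[OF insert(1,2) f2(2)])
    subgoal using c by simp
    unfolding IH by (rule alg1) (use c s1 insert(7,8) in auto)
qed

lemma LC1:
  assumes "finite X" "X \<subseteq> E" "a \<in> X \<rightarrow> carrier R" "\<alpha> \<in> carrier R" "i < n"
  shows "(\<Oplus>x\<in>X. (\<alpha> \<otimes> a x) \<otimes> phi x i) = \<alpha> \<otimes> (\<Oplus>x\<in>X. a x \<otimes> phi x i)"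
proof -
  have "(\<Oplus>x\<in>X. (\<alpha> \<otimes> a x) \<otimes> phi x i) = (\<Oplus>x\<in>X. (\<alpha> \<otimes> a x \<oplus> \<zero> \<otimes> a x) \<otimes> phi x i)"
  proof (rule finsum_cong'[OF refl])
    have "(\<lambda>x. \<alpha> \<otimes> a x \<oplus> \<zero> \<otimes> a x) \<in> X \<rightarrow> carrier R"
    proof (rule Pi_I)
      fix x assume "x \<in> X" then have "a x \<in> carrier R" using assms(3) by auto
      then show "\<alpha> \<otimes> a x \<oplus> \<zero> \<otimes> a x \<in> carrier R" using assms(4) by simp
    qed
    then show "(\<lambda>x. (\<alpha> \<otimes> a x \<oplus> \<zero> \<otimes> a x) \<otimes> phi x i) \<in> X \<rightarrow> carrier R"
      using assms(2,5) by (rule PiC)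
    fix x assume "x \<in> X" then have "a x \<in> carrier R" using assms(3) by auto
    then show "\<alpha> \<otimes> a x \<otimes> phi x i = (\<alpha> \<otimes> a x \<oplus> \<zero> \<otimes> a x) \<otimes> phi x i"
      using assms(4) by simp
  qed
  also have "\<dots> = \<alpha> \<otimes> (\<Oplus>x\<in>X. a x \<otimes> phi x i) \<oplus> \<zero> \<otimes> (\<Oplus>x\<in>X. a x \<otimes> phi x i)"
    using assms by (intro LC2) auto
  also have "\<dots> = \<alpha> \<otimes> (\<Oplus>x\<in>X. a x \<otimes> phi x i)"
  proof -
    have "(\<lambda>x. a x \<otimes> phi x i) \<in> X \<rightarrow> carrier R" using assms by (intro PiC)
    then have "(\<Oplus>x\<in>X. a x \<otimes> phi x i) \<in> carrier R" by (rule finsum_closed)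
    then show ?thesis using assms(4) by simp
  qed
  finally show ?thesis .
qed

lemma RS:
  assumes "finite X" "Y \<subseteq> X" "X \<subseteq> E" "d \<in> X \<rightarrow> carrier R" "\<forall>z\<in>X-Y. d z = \<zero>" "i < n"
  shows "(\<Oplus>x\<in>X. d x \<otimes> phi x i) = (\<Oplus>x\<in>Y. d x \<otimes> phi x i)"
  apply (rule add.finprod_mono_neutral_cong_right)
  using assms carr by (auto simp: Pi_def)

lemma DEP:
  assumes "finite X" "X \<subseteq> E" "d \<in> X \<rightarrow> carrier R" "\<forall>i<n. (\<Oplus>x\<in>X. d x \<otimes> phi x i) = \<zero>"
    "x \<in> Y" "Y \<subseteq> X" "d x \<noteq> \<zero>" "\<forall>z\<in>X-Y. d z = \<zero>"
  shows "\<not> I Y"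
proof
  assume "I Y"
  then have li: "lin_indep_over R n phi Y" using rep assms by auto
  have "\<forall>i<n. (\<Oplus>x\<in>Y. d x \<otimes> phi x i) = \<zero>"
    using assms RS by auto
  moreover have "d \<in> Y \<rightarrow> carrier R" using assms by auto
  ultimately have "d x = \<zero>" using li assms(5) unfolding lin_indep_over_def by blast
  then show False using assms by auto
qed

lemma SP:
  assumes "I S" "x \<in> E - S" "\<not> I (insert x S)"
  shows "\<exists>a \<in> S \<rightarrow> carrier R. \<forall>i<n. phi x i = (\<Oplus>s\<in>S. a s \<otimes> phi s i)"
proof -
  have SE: "S \<subseteq> E" using assms(1) by (rule indep_sub)
  have fS: "finite S" using assms(1) by (rule indep_finite)
  have xS: "x \<notin> S" "x \<in> E" using assms(2) by auto
  have iSE: "insert x S \<subseteq> E" using SE xS by blast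
  have "\<not> lin_indep_over R n phi (insert x S)" using assms(3) rep[OF iSE] by blast
  then obtain c where c: "c \<in> insert x S \<rightarrow> carrier R"
    "\<forall>i<n. (\<Oplus>y\<in>insert x S. c y \<otimes> phi y i) = \<zero>" "\<exists>y\<in>insert x S. c y \<noteq> \<zero>"
    unfolding lin_indep_over_def by blast
  have cS: "c \<in> S \<rightarrow> carrier R" using c(1) by (simp add: Pi_iff)
  have fc: "(\<lambda>y. c y \<otimes> phi y i) \<in> S \<rightarrow> carrier R" if "i < n" for i
    using cS SE that by (rule PiC)
  have cx: "c x \<in> carrier R" using c(1) by (simp add: Pi_iff)
  have px: "phi x i \<in> carrier R" if "i < n" for i using carr[OF xS(2) that] .
  have sc: "(\<Oplus>y\<in>S. c y \<otimes> phi y i) \<in> carrier R" if "i < n" for i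
    using fc[OF that] by (rule finsum_closed)
  have sum: "c x \<otimes> phi x i \<oplus> (\<Oplus>y\<in>S. c y \<otimes> phi y i) = \<zero>" if i: "i < n" for i
  proof -
    have "(\<Oplus>y\<in>insert x S. c y \<otimes> phi y i) = c x \<otimes> phi x i \<oplus> (\<Oplus>y\<in>S. c y \<otimes> phi y i)"
      using finsum_insert[OF fS xS(1) fc[OF i]] cx px[OF i] by simp
    then show ?thesis using c(2) i by simp
  qed
  have li: "lin_indep_over R n phi S" using assms(1) rep[OF SE] by blast
  have cx0: "c x \<noteq> \<zero>"
  proof
    assume cx0: "c x = \<zero>"
    have "(\<Oplus>y\<in>S. c y \<otimes> phi y i) = \<zero>" if i: "i < n" for i
    proof -
      have "c x \<otimes> phi x i = \<zero>" using cx0 px[OF i] by simp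
      then show ?thesis using sum[OF i] sc[OF i] by simp
    qed
    then have "\<forall>y\<in>S. c y = \<zero>" using li cS unfolding lin_indep_over_def by blast
    then show False using c(3) cx0 by blast
  qed
  have cxU: "c x \<in> Units R" using cx cx0 field_Units by blast
  have ic: "inv (c x) \<in> carrier R" using cxU by (rule Units_inv_closed)
  have mic: "\<ominus> (inv (c x)) \<in> carrier R" using ic by (rule a_inv_closed)
  define a where "a = (\<lambda>s. (\<ominus> (inv (c x))) \<otimes> c s)"
  show ?thesis
  proof (intro bexI[of _ a] allI impI)
    show "a \<in> S \<rightarrow> carrier R" unfolding a_def using cS mic by (auto simp: Pi_iff)
    fix i assume i: "i < n"
    have "(\<Oplus>s\<in>S. a s \<otimes> phi s i) = (\<ominus> (inv (c x))) \<otimes> (\<Oplus>s\<in>S. c s \<otimes> phi s i)"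
      unfolding a_def using fS SE cS mic i by (rule LC1)
    also have "(\<Oplus>s\<in>S. c s \<otimes> phi s i) = \<ominus> (c x \<otimes> phi x i)"
    proof -
      have "(\<Oplus>s\<in>S. c s \<otimes> phi s i) \<oplus> c x \<otimes> phi x i = \<zero>"
        using sum[OF i] sc[OF i] cx px[OF i] by (simp add: a_comm)
      then show ?thesis using sc[OF i] cx px[OF i] by (intro minus_equality[symmetric]) auto
    qed
    also have "(\<ominus> (inv (c x))) \<otimes> \<ominus> (c x \<otimes> phi x i) = (inv (c x) \<otimes> c x) \<otimes> phi x i"
      using ic cx px[OF i] by (simp add: m_assoc r_minus l_minus)
    also have "\<dots> = phi x i" using cxU px[OF i] by simp
    finally show "phi x i = (\<Oplus>s\<in>S. a s \<otimes> phi s i)" by simp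
  qed
qed


definition coord where
  "coord B x a \<longleftrightarrow> a \<in> B \<rightarrow> carrier R \<and> (\<forall>i<n. phi x i = (\<Oplus>b\<in>B. a b \<otimes> phi b i))"

lemma coord_ex:
  assumes "I B" "card B = matroid_rank E I" "x \<in> E - B"
  shows "\<exists>a. coord B x a"
proof -
  have fB: "finite B" using assms(1) by (rule indep_finite)
  have "\<not> I (insert x B)"
  proof
    assume "I (insert x B)"
    then have "card (insert x B) \<le> matroid_rank E I" by (rule rank_upper)
    then show False using assms fB by simp
  qed
  then show ?thesis using SP[OF assms(1,3)] unfolding coord_def by blast
qed

lemma UQ:
  assumes "I B" "coord B x a" "coord B x a'" "b \<in> B"
  shows "a b = a' b"
proof -
  have BE: "B \<subseteq> E" using assms(1) by (rule indep_sub)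
  have fB: "finite B" using assms(1) by (rule indep_finite)
  have a: "a \<in> B \<rightarrow> carrier R" "a' \<in> B \<rightarrow> carrier R" using assms unfolding coord_def by auto
  define d where "d = (\<lambda>z. \<one> \<otimes> a z \<oplus> \<ominus> \<one> \<otimes> a' z)"
  have dC: "d \<in> B \<rightarrow> carrier R" unfolding d_def using a by (auto simp: Pi_iff)
  have "(\<Oplus>z\<in>B. d z \<otimes> phi z i) = \<zero>" if i: "i < n" for i
  proof -
    have "(\<Oplus>z\<in>B. d z \<otimes> phi z i) = \<one> \<otimes> (\<Oplus>z\<in>B. a z \<otimes> phi z i) \<oplus> \<ominus> \<one> \<otimes> (\<Oplus>z\<in>B. a' z \<otimes> phi z i)"
      unfolding d_def using fB BE a one_closed a_inv_closed[OF one_closed] i by (rule LC2)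
    also have "\<dots> = \<one> \<otimes> phi x i \<oplus> \<ominus> \<one> \<otimes> phi x i"
    proof -
      have e1: "phi x i = (\<Oplus>z\<in>B. a z \<otimes> phi z i)" using assms(2) i unfolding coord_def by blast
      have e2: "phi x i = (\<Oplus>z\<in>B. a' z \<otimes> phi z i)" using assms(3) i unfolding coord_def by blast
      show ?thesis by (simp only: e1[symmetric] e2[symmetric])
    qed
    also have "\<dots> = \<zero>"
    proof -
      have "(\<Oplus>z\<in>B. a z \<otimes> phi z i) \<in> carrier R" using PiC[OF a(1) BE i] by (rule finsum_closed)
      moreover have "phi x i = (\<Oplus>z\<in>B. a z \<otimes> phi z i)" using assms(2) i unfolding coord_def by blast
      ultimately have "phi x i \<in> carrier R" by simp
      then show ?thesis by (rule h2)
    qed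
    finally show ?thesis .
  qed
  moreover have "lin_indep_over R n phi B" using assms(1) rep[OF BE] by blast
  ultimately have "d b = \<zero>" using dC assms(4) unfolding lin_indep_over_def by blast
  moreover have "a b \<in> carrier R" "a' b \<in> carrier R" using a assms(4) by auto
  ultimately show ?thesis using h1 unfolding d_def by blast
qed

lemma phiC: "coord B x a \<Longrightarrow> B \<subseteq> E \<Longrightarrow> i < n \<Longrightarrow> phi x i \<in> carrier R"
proof -
  assume c: "coord B x a" "B \<subseteq> E" "i < n"
  then have "(\<Oplus>z\<in>B. a z \<otimes> phi z i) \<in> carrier R"
    using PiC[of a B i] unfolding coord_def by (auto intro: finsum_closed)
  moreover have "phi x i = (\<Oplus>z\<in>B. a z \<otimes> phi z i)" using c unfolding coord_def by blast
  ultimately show ?thesis by simp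
qed

lemma INSPAN:
  assumes "I B" "T \<subseteq> B" "x \<in> E - B" "coord B x a" "\<forall>z\<in>B-T. a z = \<zero>"
  shows "\<not> I (insert x T)"
proof -
  have BE: "B \<subseteq> E" using assms(1) by (rule indep_sub)
  have fB: "finite B" using assms(1) by (rule indep_finite)
  have aC: "a \<in> B \<rightarrow> carrier R" using assms(4) unfolding coord_def by auto
  have xB: "x \<notin> B" "x \<in> E" using assms(3) by auto
  define d where "d = (\<lambda>z. if z = x then \<one> else \<ominus> \<one> \<otimes> a z)"
  have dB: "d \<in> B \<rightarrow> carrier R" unfolding d_def using aC xB by (auto simp: Pi_iff)
  have dX: "d \<in> insert x B \<rightarrow> carrier R" using dB unfolding d_def by (auto simp: Pi_iff)
  have "(\<Oplus>z\<in>insert x B. d z \<otimes> phi z i) = \<zero>" if i: "i < n" for i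
  proof -
    have px: "phi x i \<in> carrier R" using carr xB i by blast
    have "(\<Oplus>z\<in>insert x B. d z \<otimes> phi z i) = d x \<otimes> phi x i \<oplus> (\<Oplus>z\<in>B. d z \<otimes> phi z i)"
      using finsum_insert[OF fB xB(1) PiC[OF dB BE i]] px unfolding d_def by simp
    also have "(\<Oplus>z\<in>B. d z \<otimes> phi z i) = (\<Oplus>z\<in>B. (\<ominus> \<one> \<otimes> a z) \<otimes> phi z i)"
    proof (rule finsum_cong'[OF refl])
      have "(\<lambda>z. \<ominus> \<one> \<otimes> a z) \<in> B \<rightarrow> carrier R" using aC by (auto simp: Pi_iff)
      then show "(\<lambda>z. (\<ominus> \<one> \<otimes> a z) \<otimes> phi z i) \<in> B \<rightarrow> carrier R" using BE i by (rule PiC)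
    qed (use xB in \<open>auto simp: d_def\<close>)
    also have "\<dots> = \<ominus> \<one> \<otimes> (\<Oplus>z\<in>B. a z \<otimes> phi z i)"
      using fB BE aC a_inv_closed[OF one_closed] i by (rule LC1)
    also have "\<dots> = \<ominus> \<one> \<otimes> phi x i"
    proof -
      have e1: "phi x i = (\<Oplus>z\<in>B. a z \<otimes> phi z i)" using assms(4) i unfolding coord_def by blast
      show ?thesis by (simp only: e1[symmetric])
    qed
    finally show ?thesis unfolding d_def using h2[OF px] by simp
  qed
  then show ?thesis
    apply (intro DEP[of "insert x B" d x])
    using fB BE xB dX assms(2,5) unfolding d_def by auto
qed

lemma PAIR:
  assumes "I B" "T \<subseteq> B" "x \<in> E - B" "y \<in> E - B" "x \<noteq> y" "coord B x a" "coord B y a'"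
    "\<beta> \<in> carrier R" "\<forall>z\<in>B-T. a z = \<beta> \<otimes> a' z"
  shows "\<not> I (insert x (insert y T))"
proof -
  have BE: "B \<subseteq> E" using assms(1) by (rule indep_sub)
  have fB: "finite B" using assms(1) by (rule indep_finite)
  have aC: "a \<in> B \<rightarrow> carrier R" "a' \<in> B \<rightarrow> carrier R" using assms(6,7) unfolding coord_def by auto
  have xB: "x \<notin> B" "x \<in> E" "y \<notin> B" "y \<in> E" using assms(3,4) by auto
  define d where "d = (\<lambda>z. if z = x then \<one> else if z = y then \<ominus> \<beta> else \<ominus> \<one> \<otimes> a z \<oplus> \<beta> \<otimes> a' z)"
  have dB: "d \<in> B \<rightarrow> carrier R" unfolding d_def using aC xB assms(8) by (auto simp: Pi_iff)
  have dyB: "d \<in> insert y B \<rightarrow> carrier R" using dB assms(8) unfolding d_def by (auto simp: Pi_iff)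
  have dX: "d \<in> insert x (insert y B) \<rightarrow> carrier R" using dyB unfolding d_def by (auto simp: Pi_iff)
  have fyB: "finite (insert y B)" using fB by simp
  have yBE: "insert y B \<subseteq> E" using BE xB by auto
  have xyB: "x \<notin> insert y B" using xB assms(5) by auto
  have "(\<Oplus>z\<in>insert x (insert y B). d z \<otimes> phi z i) = \<zero>" if i: "i < n" for i
  proof -
    have px: "phi x i \<in> carrier R" "phi y i \<in> carrier R" using carr xB i by blast+
    have "(\<Oplus>z\<in>insert x (insert y B). d z \<otimes> phi z i) = d x \<otimes> phi x i \<oplus> (\<Oplus>z\<in>insert y B. d z \<otimes> phi z i)"
      using finsum_insert[OF fyB xyB PiC[OF dyB yBE i]] px unfolding d_def by simp
    also have "(\<Oplus>z\<in>insert y B. d z \<otimes> phi z i) = d y \<otimes> phi y i \<oplus> (\<Oplus>z\<in>B. d z \<otimes> phi z i)"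
      using finsum_insert[OF fB xB(3) PiC[OF dB BE i]] px assms(8) assms(5) unfolding d_def by simp
    also have "(\<Oplus>z\<in>B. d z \<otimes> phi z i) = (\<Oplus>z\<in>B. (\<ominus> \<one> \<otimes> a z \<oplus> \<beta> \<otimes> a' z) \<otimes> phi z i)"
    proof (rule finsum_cong'[OF refl])
      have "(\<lambda>z. \<ominus> \<one> \<otimes> a z \<oplus> \<beta> \<otimes> a' z) \<in> B \<rightarrow> carrier R" using aC assms(8) by (auto simp: Pi_iff)
      then show "(\<lambda>z. (\<ominus> \<one> \<otimes> a z \<oplus> \<beta> \<otimes> a' z) \<otimes> phi z i) \<in> B \<rightarrow> carrier R" using BE i by (rule PiC)
    qed (use xB in \<open>auto simp: d_def\<close>)
    also have "\<dots> = \<ominus> \<one> \<otimes> (\<Oplus>z\<in>B. a z \<otimes> phi z i) \<oplus> \<beta> \<otimes> (\<Oplus>z\<in>B. a' z \<otimes> phi z i)"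
      using fB BE aC a_inv_closed[OF one_closed] assms(8) i by (rule LC2)
    also have "\<dots> = \<ominus> \<one> \<otimes> phi x i \<oplus> \<beta> \<otimes> phi y i"
    proof -
      have e1: "phi x i = (\<Oplus>z\<in>B. a z \<otimes> phi z i)" using assms(6) i unfolding coord_def by blast
      have e2: "phi y i = (\<Oplus>z\<in>B. a' z \<otimes> phi z i)" using assms(7) i unfolding coord_def by blast
      show ?thesis by (simp only: e1[symmetric] e2[symmetric])
    qed
    finally show ?thesis unfolding d_def using h3[OF px assms(8)] assms(5) by simp
  qed
  moreover have "\<forall>z\<in>insert x (insert y B) - insert x (insert y T). d z = \<zero>"
  proof
    fix z assume z: "z \<in> insert x (insert y B) - insert x (insert y T)"
    then have zB: "z \<in> B - T" "z \<noteq> x" "z \<noteq> y" by auto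
    then have "a' z \<in> carrier R" using aC by auto
    then show "d z = \<zero>" unfolding d_def using zB assms(9) h4 assms(8) by simp
  qed
  ultimately show ?thesis
    apply (intro DEP[of "insert x (insert y B)" d x])
    using fB BE xB dX assms(2) unfolding d_def by auto
qed

lemma INDEP:
  assumes "I B" "T \<subseteq> B" "x \<in> E - B" "coord B x a" "z \<in> B - T" "a z \<noteq> \<zero>"
  shows "I (insert x T)"
proof (rule ccontr)
  assume dep: "\<not> I (insert x T)"
  have BE: "B \<subseteq> E" using assms(1) by (rule indep_sub)
  have fB: "finite B" using assms(1) by (rule indep_finite)
  have IT: "I T" using assms(1,2) by (rule indep_mono)
  obtain a' where a': "a' \<in> T \<rightarrow> carrier R" "\<forall>i<n. phi x i = (\<Oplus>s\<in>T. a' s \<otimes> phi s i)"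
    using SP[OF IT _ dep] assms(2,3) by blast
  define a'' where "a'' = (\<lambda>z. if z \<in> T then a' z else \<zero>)"
  have a''C: "a'' \<in> B \<rightarrow> carrier R" unfolding a''_def using a' by (auto simp: Pi_iff)
  have "coord B x a''" unfolding coord_def
  proof (intro conjI allI impI a''C)
    fix i assume i: "i < n"
    have "(\<Oplus>b\<in>B. a'' b \<otimes> phi b i) = (\<Oplus>b\<in>T. a'' b \<otimes> phi b i)"
      using fB assms(2) BE a''C _ i by (rule RS) (auto simp: a''_def)
    also have "\<dots> = (\<Oplus>b\<in>T. a' b \<otimes> phi b i)"
      using PiC[OF a'(1) _ i] assms(2) BE by (intro finsum_cong'[OF refl]) (auto simp: a''_def)
    finally show "phi x i = (\<Oplus>b\<in>B. a'' b \<otimes> phi b i)" using a'(2) i by simp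
  qed
  then have "a z = a'' z" using UQ[OF assms(1,4)] assms(5) by blast
  then show False using assms(5,6) unfolding a''_def by auto
qed


lemma two_elems:
  assumes "finite B" "2 \<le> card B"
  obtains c1 c2 where "c1 \<in> B" "c2 \<in> B" "c1 \<noteq> c2"
proof -
  obtain c1 where c1: "c1 \<in> B" using assms by fastforce
  have "card (B - {c1}) \<ge> 1" using assms c1 by simp
  then have "B - {c1} \<noteq> {}" by (metis card.empty not_one_le_zero)
  then obtain c2 where "c2 \<in> B - {c1}" by blast
  then show ?thesis using that c1 by blast
qed

lemma L1:
  assumes U: "kl_uniform E I 1 l" and B: "I B" "card B = matroid_rank E I" "2 \<le> card B"
    and fc: "finite (carrier R)"
  shows "card (E - B) \<le> card (carrier R) ^ 2 * l"
proof -
  have fB: "finite B" using B(1) by (rule indep_finite)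
  have BE: "B \<subseteq> E" using B(1) by (rule indep_sub)
  obtain c1 c2 where c: "c1 \<in> B" "c2 \<in> B" "c1 \<noteq> c2" using two_elems[OF fB B(3)] by blast
  define T where "T = B - {c1, c2}"
  have TB: "T \<subseteq> B" unfolding T_def by auto
  have BT: "B - T = {c1, c2}" unfolding T_def using c by auto
  have cardT: "card T + 2 = card B"
  proof -
    have "card {c1, c2} = 2" using c by simp
    moreover have "card {c1, c2} \<le> card B" using c fB by (intro card_mono) auto
    moreover have "card T = card B - card {c1, c2}" unfolding T_def using c fB by (intro card_Diff_subset) auto
    ultimately show ?thesis by simp
  qed
  define co where "co x = (SOME a. coord B x a)" for x
  have co: "coord B x (co x)" if "x \<in> E - B" for x
    unfolding co_def using coord_ex[OF B(1,2) that] by (rule someI_ex)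
  have coC: "co x z \<in> carrier R" if "x \<in> E - B" "z \<in> B" for x z
    using co[OF that(1)] that(2) unfolding coord_def by auto
  define g where "g x = (if I (insert x T) then (co x c1, co x c2) else (\<zero>, \<zero>))" for x
  define P where "P v = {x \<in> E - B. g x = v}" for v
  have Pcard: "card (P v) \<le> l" if v: "v \<in> g ` (E - B)" for v
  proof (cases "v = (\<zero>, \<zero>)")
    case True
    define K where "K = insert c1 T"
    have KB: "K \<subseteq> B" unfolding K_def using c TB by auto
    have IK: "I K" using B(1) KB by (rule indep_mono)
    have cK: "card K + 1 = card B" unfolding K_def using cardT c fB TB
      by (simp add: T_def finite_subset)
    have dep: "\<not> I (insert x T)" if x: "x \<in> P v" for x
    proof
      assume ind: "I (insert x T)"
      have xEB: "x \<in> E - B" using x unfolding P_def by auto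
      have "g x = (\<zero>, \<zero>)" using x True unfolding P_def by auto
      then have "co x c1 = \<zero>" "co x c2 = \<zero>" using ind unfolding g_def by auto
      then have "\<forall>z\<in>B-T. co x z = \<zero>" using BT by auto
      then have "\<not> I (insert x T)" using INSPAN[OF B(1) TB xEB co[OF xEB]] by blast
      then show False using ind by blast
    qed
    have "card (P v) < l"
    proof (rule Wk[OF U IK])
      show "card K + 1 \<le> matroid_rank E I" using cK B(2) by simp
      show "P v \<subseteq> E - K" unfolding P_def using KB by auto
      show "\<forall>x\<in>P v. \<not> I (insert x K)"
      proof
        fix x assume "x \<in> P v"
        then have "\<not> I (insert x T)" by (rule dep)
        moreover have "insert x T \<subseteq> insert x K" unfolding K_def by auto
        ultimately show "\<not> I (insert x K)" using indep_mono by blast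
      qed
    qed
    then show ?thesis by simp
  next
    case False
    obtain y where y: "y \<in> E - B" "g y = v" using v by auto
    have Iy: "I (insert y T)"
    proof (rule ccontr)
      assume "\<not> I (insert y T)"
      then have "g y = (\<zero>, \<zero>)" unfolding g_def by simp
      then show False using y False by simp
    qed
    define K where "K = insert y T"
    have yT: "y \<notin> T" using y TB by auto
    have fT: "finite T" using fB TB finite_subset by blast
    have cK: "card K + 1 = card B" unfolding K_def using cardT yT fT by simp
    have "card (P v - {y}) < l"
    proof (rule Wk[OF U])
      show "I K" unfolding K_def by (rule Iy)
      show "card K + 1 \<le> matroid_rank E I" using cK B(2) by simp
      show "P v - {y} \<subseteq> E - K" unfolding P_def K_def using TB by auto
      show "\<forall>x\<in>P v - {y}. \<not> I (insert x K)"
      proof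
        fix x assume x: "x \<in> P v - {y}"
        have xEB: "x \<in> E - B" using x unfolding P_def by auto
        have gx: "g x = v" using x unfolding P_def by auto
        have Ix: "I (insert x T)"
        proof (rule ccontr)
          assume "\<not> I (insert x T)"
          then have "g x = (\<zero>, \<zero>)" unfolding g_def by simp
          then show False using gx False by simp
        qed
        have "co x c1 = co y c1" "co x c2 = co y c2"
          using gx y(2) Ix Iy unfolding g_def by auto
        then have "\<forall>z\<in>B-T. co x z = \<one> \<otimes> co y z"
          using BT coC[OF y(1)] c by auto
        then show "\<not> I (insert x K)" unfolding K_def
          using PAIR[OF B(1) TB xEB y(1) _ co[OF xEB] co[OF y(1)] one_closed] x by blast
      qed
    qed
    moreover have "finite (P v)" unfolding P_def using fin by auto
    ultimately show ?thesis using y unfolding P_def by (simp add: card_Diff_singleton_if split: if_splits)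
  qed
  have "E - B = (\<Union>v\<in>g ` (E - B). P v)" unfolding P_def by auto
  then have "card (E - B) \<le> (\<Sum>v\<in>g ` (E - B). card (P v))"
    by (metis card_UN_le fin finite_Diff finite_imageI)
  also have "\<dots> \<le> card (g ` (E - B)) * l"
    using Pcard sum_bounded_above[of "g ` (E - B)" "\<lambda>v. card (P v)" l] by auto
  also have "card (g ` (E - B)) \<le> card (carrier R \<times> carrier R)"
  proof (rule card_mono)
    show "finite (carrier R \<times> carrier R)" using fc by simp
    show "g ` (E - B) \<subseteq> carrier R \<times> carrier R"
      unfolding g_def using coC c by auto
  qed
  then have "card (g ` (E - B)) * l \<le> card (carrier R) ^ 2 * l"
    by (simp add: card_cartesian_product power2_eq_square)
  finally show ?thesis .
qed

lemma L2:
  assumes cos: "cosimple_matroid E I" and B: "I B" "card B = matroid_rank E I"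
    and fc: "finite (carrier R)"
  shows "card B \<le> card (carrier R) ^ card (E - B)"
proof (rule ccontr)
  assume big: "\<not> ?thesis"
  have fB: "finite B" using B(1) by (rule indep_finite)
  have BE: "B \<subseteq> E" using B(1) by (rule indep_sub)
  define co where "co x = (SOME a. coord B x a)" for x
  have co: "coord B x (co x)" if "x \<in> E - B" for x
    unfolding co_def using coord_ex[OF B(1,2) that] by (rule someI_ex)
  have coC: "co x z \<in> carrier R" if "x \<in> E - B" "z \<in> B" for x z
    using co[OF that(1)] that(2) unfolding coord_def by auto
  define row where "row b = restrict (\<lambda>x. co x b) (E - B)" for b
  have rowin: "row ` B \<subseteq> PiE (E - B) (\<lambda>_. carrier R)"
  proof (rule image_subsetI)
    fix b assume b: "b \<in> B"
    have "\<forall>x\<in>E - B. co x b \<in> carrier R" using coC b by blast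
    then show "row b \<in> PiE (E - B) (\<lambda>_. carrier R)" unfolding row_def restrict_PiE_iff .
  qed
  have fP: "finite (PiE (E - B) (\<lambda>_. carrier R))" using fin fc by (simp add: finite_PiE)
  have cP: "card (PiE (E - B) (\<lambda>_. carrier R)) = card (carrier R) ^ card (E - B)"
    using fin by (simp add: card_PiE)
  have "\<not> inj_on row B"
  proof
    assume "inj_on row B"
    have "card B \<le> card (PiE (E - B) (\<lambda>_. carrier R))"
      using card_inj_on_le[OF \<open>inj_on row B\<close> rowin fP] .
    then show False using big cP by simp
  qed
  then obtain b b' where bb: "b \<in> B" "b' \<in> B" "b \<noteq> b'" "row b = row b'"
    unfolding inj_on_def by blast
  have same: "co x b = co x b'" if "x \<in> E - B" for x
    using bb(4) that unfolding row_def by (metis restrict_apply')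
  have no_basis: False if K: "I K" "card K < card B" "x \<in> E" "y \<in> E"
     "\<forall>z\<in>E - {x, y}. z \<in> K \<or> \<not> I (insert z K)" for K x y
  proof -
    have "dual_indep E I {x, y}" using cos K(3,4) unfolding cosimple_matroid_def simple_matroid_def by blast
    then obtain B' where B': "basis_of I E B'" "{x, y} \<inter> B' = {}" unfolding dual_indep_def by blast
    have IB': "I B'" and B'E: "B' \<subseteq> E" using B'(1) unfolding basis_of_def by auto
    have "card B' \<le> card K"
    proof (rule cl_bound[OF K(1) IB'])
      show "\<forall>z\<in>B'. z \<in> K \<or> \<not> I (insert z K)" using K(5) B'(2) B'E by blast
    qed
    moreover have "card B' = matroid_rank E I" using B'(1) by (rule basis_card)
    ultimately show False using K(2) B(2) by simp
  qed
  show False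
  proof (cases "\<forall>x\<in>E-B. co x b = \<zero>")
    case True
    define K where "K = B - {b}"
    have IK: "I K" unfolding K_def using B(1) by (rule indep_mono) auto
    have "card B > 0" using fB bb(1) card_gt_0_iff by blast
    then have cK: "card K < card B" unfolding K_def using fB bb(1) by simp
    have "\<forall>x\<in>E - B. \<not> I (insert x K)"
    proof
      fix x assume x: "x \<in> E - B"
      have "\<forall>z\<in>B-K. co x z = \<zero>" unfolding K_def using True x by auto
      then show "\<not> I (insert x K)" using INSPAN[OF B(1) _ x co[OF x]] unfolding K_def by blast
    qed
    then have "\<forall>x\<in>E - {b}. x \<in> K \<or> \<not> I (insert x K)" unfolding K_def by blast
    then show False using no_basis[OF IK cK, of b b] bb BE by auto
  next
    case False
    then obtain x0 where x0: "x0 \<in> E - B" "co x0 b \<noteq> \<zero>" by blast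
    define T where "T = B - {b, b'}"
    define K where "K = insert x0 T"
    have TB: "T \<subseteq> B" unfolding T_def by auto
    have IK: "I K" unfolding K_def using INDEP[OF B(1) TB x0(1) co[OF x0(1)] _ x0(2)] bb(1)
      unfolding T_def by blast
    have fT: "finite T" using fB TB finite_subset by blast
    have cardT: "card T + 2 = card B"
    proof -
      have "card {b, b'} = 2" using bb by simp
      moreover have "card {b, b'} \<le> card B" using bb fB by (intro card_mono) auto
      moreover have "card T = card B - card {b, b'}" unfolding T_def using bb fB by (intro card_Diff_subset) auto
      ultimately show ?thesis by simp
    qed
    have cK: "card K < card B" unfolding K_def using cardT fT by (simp add: card_insert_if)
    have al: "co x0 b \<in> carrier R" using coC[OF x0(1) bb(1)] .
    have "\<forall>x\<in>E - {b, b'}. x \<in> K \<or> \<not> I (insert x K)"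
    proof
      fix x assume x: "x \<in> E - {b, b'}"
      show "x \<in> K \<or> \<not> I (insert x K)"
      proof (cases "x \<in> B \<or> x = x0")
        case True
        then show ?thesis using x unfolding K_def T_def by auto
      next
        case False
        then have xEB: "x \<in> E - B" "x \<noteq> x0" using x by auto
        define \<beta> where "\<beta> = co x b \<otimes> inv (co x0 b)"
        have U: "co x0 b \<in> Units R" using al x0(2) field_Units by blast
        have bC: "\<beta> \<in> carrier R" unfolding \<beta>_def using coC[OF xEB(1) bb(1)] U by simp
        have "\<forall>z\<in>B-T. co x z = \<beta> \<otimes> co x0 z"
        proof
          fix z assume "z \<in> B - T"
          then have "z = b \<or> z = b'" unfolding T_def by auto
          moreover have "co x b = \<beta> \<otimes> co x0 b"
            unfolding \<beta>_def using h5[OF coC[OF xEB(1) bb(1)] al x0(2)] .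
          ultimately show "co x z = \<beta> \<otimes> co x0 z" using same[OF xEB(1)] same[OF x0(1)] by auto
        qed
        then have "\<not> I (insert x (insert x0 T))"
          using PAIR[OF B(1) TB xEB(1) x0(1) xEB(2) co[OF xEB(1)] co[OF x0(1)] bC] by blast
        then show ?thesis unfolding K_def by blast
      qed
    qed
    then show False using no_basis[OF IK cK, of b b'] bb BE by auto
  qed
qed

lemma base_bound:
  assumes U: "kl_uniform E I 1 l" and cos: "cosimple_matroid E I" and fc: "finite (carrier R)"
  shows "matroid_rank E I \<le> card (carrier R) ^ (card (carrier R) ^ 2 * l)"
proof -
  obtain B where B: "I B" "card B = matroid_rank E I" using rank_attained by blast
  have q1: "card (carrier R) \<ge> 1" using fc zero_closed by (metis One_nat_def Suc_leI card_gt_0_iff empty_iff)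
  show ?thesis
  proof (cases "2 \<le> card B")
    case True
    have "card (E - B) \<le> card (carrier R) ^ 2 * l" using L1[OF U B True fc] .
    then have "card (carrier R) ^ card (E - B) \<le> card (carrier R) ^ (card (carrier R) ^ 2 * l)"
      using q1 by (intro power_increasing) auto
    then show ?thesis using L2[OF cos B fc] B(2) by simp
  next
    case False
    then have "matroid_rank E I \<le> 1" using B(2) by simp
    also have "1 \<le> card (carrier R) ^ (card (carrier R) ^ 2 * l)" using q1 by simp
    finally show ?thesis .
  qed
qed

end

lemma GF_q: "GF_representable q E I \<Longrightarrow> q \<ge> 1"
proof -
  assume "GF_representable q E I"
  then obtain R :: "nat ring" where R: "field R" "finite (carrier R)" "card (carrier R) = q"
    unfolding GF_representable_def by blast
  have "\<zero>\<^bsub>R\<^esub> \<in> carrier R" using R(1) by (simp add: field.is_ring ring.ring_simprules(2))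
  then have "carrier R \<noteq> {}" by blast
  then show "q \<ge> 1" using R(2,3) by (metis One_nat_def Suc_leI card_gt_0_iff)
qed

lemma good_base:
  assumes "good_matroid 1 l q E I"
  shows "matroid_rank E I \<le> q ^ (q ^ 2 * l)"
proof -
  from assms have M: "matroid E I" "cosimple_matroid E I" "kl_uniform E I 1 l" "GF_representable q E I"
    unfolding good_matroid_def by auto
  then obtain R :: "nat ring" and n phi where R: "field R" "finite (carrier R)" "card (carrier R) = q"
    "\<forall>x\<in>E. \<forall>i<n. phi x i \<in> carrier R" "\<forall>X. X \<subseteq> E \<longrightarrow> (I X \<longleftrightarrow> lin_indep_over R n phi X)"
    unfolding GF_representable_def representable_over_def by blast
  have "rep E I R n phi"
    unfolding rep_def rep_axioms_def mat_def using M(1) R(1,4,5) by blast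
  from rep.base_bound[OF this M(3,2) R(2)] R(3) show ?thesis by simp
qed

lemma GF_restr:
  assumes "GF_representable q E I" "Z \<subseteq> E"
  shows "GF_representable q Z (\<lambda>X. I X \<and> X \<subseteq> Z)"
proof -
  obtain R :: "nat ring" where R: "field R" "finite (carrier R)" "card (carrier R) = q"
    "representable_over R E I"
    using assms(1) unfolding GF_representable_def by blast
  obtain n phi where P: "\<forall>x\<in>E. \<forall>i<n. phi x i \<in> carrier R"
    "\<forall>X. X \<subseteq> E \<longrightarrow> (I X \<longleftrightarrow> lin_indep_over R n phi X)"
    using R(4) unfolding representable_over_def by blast
  have 1: "\<forall>x\<in>Z. \<forall>i<n. phi x i \<in> carrier R" using P(1) assms(2) by blast
  have 2: "\<forall>X. X \<subseteq> Z \<longrightarrow> ((I X \<and> X \<subseteq> Z) \<longleftrightarrow> lin_indep_over R n phi X)"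
  proof (intro allI impI)
    fix X assume X: "X \<subseteq> Z"
    then have "X \<subseteq> E" using assms(2) by blast
    then have "I X \<longleftrightarrow> lin_indep_over R n phi X" using P(2) by blast
    then show "(I X \<and> X \<subseteq> Z) \<longleftrightarrow> lin_indep_over R n phi X" using X by simp
  qed
  have "representable_over R Z (\<lambda>X. I X \<and> X \<subseteq> Z)"
    unfolding representable_over_def using 1 2 by blast
  then show ?thesis unfolding GF_representable_def using R(1-3) by blast
qed

lemma P3_good:
  assumes "good_matroid k l q E I" "k \<ge> 2" "\<not> kl_uniform E I (k - 1) (l + 1)"
  shows "\<exists>Z \<subseteq> E. good_matroid 1 l q Z (\<lambda>X. I X \<and> X \<subseteq> Z)
    \<and> matroid_rank E I \<le> matroid_rank Z (\<lambda>X. I X \<and> X \<subseteq> Z) + (k - 1)"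
proof -
  from assms(1) have MM: "matroid E I" "simple_matroid E I" "cosimple_matroid E I"
    "GF_representable q E I" "kl_uniform E I k l" unfolding good_matroid_def by auto
  interpret mat E I using MM(1) by unfold_locales
  obtain Z where Z: "Z \<subseteq> E" "matroid Z (\<lambda>X. I X \<and> X \<subseteq> Z)" "simple_matroid Z (\<lambda>X. I X \<and> X \<subseteq> Z)"
    "cosimple_matroid Z (\<lambda>X. I X \<and> X \<subseteq> Z)" "kl_uniform Z (\<lambda>X. I X \<and> X \<subseteq> Z) 1 l"
    "matroid_rank E I \<le> matroid_rank Z (\<lambda>X. I X \<and> X \<subseteq> Z) + (k - 1)"
    using P3[OF MM(5) assms(2,3) MM(2)] by blast
  have "good_matroid 1 l q Z (\<lambda>X. I X \<and> X \<subseteq> Z)"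
    unfolding good_matroid_def using Z GF_restr[OF MM(4) Z(1)] by blast
  then show ?thesis using Z(1,6) by blast
qed

lemma bound_all:
  "k \<ge> 1 \<Longrightarrow> good_matroid k l q E I \<Longrightarrow> matroid_rank E I \<le> q ^ (q ^ 2 * (l + k)) + k"
proof (induction k arbitrary: l E I rule: less_induct)
  case (less k)
  have q1: "q \<ge> 1" using less.prems(2) GF_q unfolding good_matroid_def by blast
  have mono: "q ^ (q ^ 2 * a) \<le> q ^ (q ^ 2 * b)" if "a \<le> b" for a b
    using q1 that by (intro power_increasing) auto
  show ?case
  proof (cases "k = 1")
    case True
    then have "matroid_rank E I \<le> q ^ (q ^ 2 * l)" using good_base less.prems(2) by blast
    also have "\<dots> \<le> q ^ (q ^ 2 * (l + k))" using mono[of l "l + k"] by simp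
    finally show ?thesis by simp
  next
    case False
    then have k2: "k \<ge> 2" using less.prems(1) by simp
    show ?thesis
    proof (cases "kl_uniform E I (k - 1) (l + 1)")
      case True
      then have "good_matroid (k - 1) (l + 1) q E I" using less.prems(2) unfolding good_matroid_def by blast
      moreover have "k - 1 < k" "1 \<le> k - 1" using k2 by auto
      ultimately have "matroid_rank E I \<le> q ^ (q ^ 2 * ((l + 1) + (k - 1))) + (k - 1)"
        using less.IH by blast
      moreover have "(l + 1) + (k - 1) = l + k" using k2 by simp
      ultimately have "matroid_rank E I \<le> q ^ (q ^ 2 * (l + k)) + (k - 1)" by simp
      then show ?thesis by simp
    next
      case False
      obtain Z where Z: "Z \<subseteq> E" "good_matroid 1 l q Z (\<lambda>X. I X \<and> X \<subseteq> Z)"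
        "matroid_rank E I \<le> matroid_rank Z (\<lambda>X. I X \<and> X \<subseteq> Z) + (k - 1)"
        using P3_good[OF less.prems(2) k2 False] by blast
      then have "matroid_rank Z (\<lambda>X. I X \<and> X \<subseteq> Z) \<le> q ^ (q ^ 2 * (l + 1)) + 1"
        using less.IH[of 1] k2 by simp
      then have "matroid_rank E I \<le> q ^ (q ^ 2 * (l + 1)) + 1 + (k - 1)" using Z(3) by simp
      also have "\<dots> \<le> q ^ (q ^ 2 * (l + k)) + k" using mono[of "l + 1" "l + k"] k2 by simp
      finally show ?thesis .
    qed
  qed
qed


context field begin
lemma LI_reindex:
  assumes "inj_on h X" "\<forall>x\<in>X. \<forall>i<n. phi (h x) i \<in> carrier R"
  shows "lin_indep_over R n (\<lambda>x i. phi (h x) i) X \<longleftrightarrow> lin_indep_over R n phi (h ` X)"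
proof -
  have reidx: "(\<Oplus>\<^bsub>R\<^esub>y\<in>h ` X. c y \<otimes>\<^bsub>R\<^esub> phi y i) = (\<Oplus>\<^bsub>R\<^esub>x\<in>X. c (h x) \<otimes>\<^bsub>R\<^esub> phi (h x) i)"
    if c: "c \<in> h ` X \<rightarrow> carrier R" and i: "i < n" for c i
  proof (rule finsum_reindex[OF _ assms(1)])
    show "(\<lambda>y. c y \<otimes> phi y i) \<in> h ` X \<rightarrow> carrier R"
    proof (rule Pi_I)
      fix y assume "y \<in> h ` X"
      then obtain x where "x \<in> X" "y = h x" by blast
      then show "c y \<otimes> phi y i \<in> carrier R" using c assms(2) i by auto
    qed
  qed
  show ?thesis
  proof
    assume L: "lin_indep_over R n (\<lambda>x i. phi (h x) i) X"
    show "lin_indep_over R n phi (h ` X)" unfolding lin_indep_over_def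
    proof (intro allI impI)
      fix c assume c: "c \<in> h ` X \<rightarrow> carrier R" and s: "\<forall>i<n. (\<Oplus>y\<in>h ` X. c y \<otimes> phi y i) = \<zero>"
      have c': "(\<lambda>x. c (h x)) \<in> X \<rightarrow> carrier R" using c by auto
      have "\<forall>i<n. (\<Oplus>x\<in>X. c (h x) \<otimes> phi (h x) i) = \<zero>" using s reidx[OF c] by simp
      then have "\<forall>x\<in>X. c (h x) = \<zero>" using L c' unfolding lin_indep_over_def by blast
      then show "\<forall>y\<in>h ` X. c y = \<zero>" by blast
    qed
  next
    assume L: "lin_indep_over R n phi (h ` X)"
    show "lin_indep_over R n (\<lambda>x i. phi (h x) i) X" unfolding lin_indep_over_def
    proof (intro allI impI)
      fix c assume c: "c \<in> X \<rightarrow> carrier R" and s: "\<forall>i<n. (\<Oplus>x\<in>X. c x \<otimes> phi (h x) i) = \<zero>"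
      define c' where "c' = (\<lambda>y. c (inv_into X h y))"
      have inv: "inv_into X h (h x) = x" if "x \<in> X" for x using assms(1) that by simp
      have c'C: "c' \<in> h ` X \<rightarrow> carrier R" unfolding c'_def using c inv by auto
      have "\<forall>i<n. (\<Oplus>y\<in>h ` X. c' y \<otimes> phi y i) = \<zero>"
      proof (intro allI impI)
        fix i assume i: "i < n"
        have "(\<Oplus>y\<in>h ` X. c' y \<otimes> phi y i) = (\<Oplus>x\<in>X. c' (h x) \<otimes> phi (h x) i)" using reidx[OF c'C i] .
        also have "\<dots> = (\<Oplus>x\<in>X. c x \<otimes> phi (h x) i)"
        proof (rule finsum_cong'[OF refl])
          show "(\<lambda>x. c x \<otimes> phi (h x) i) \<in> X \<rightarrow> carrier R" using c assms(2) i by auto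
          show "\<And>x. x \<in> X \<Longrightarrow> c' (h x) \<otimes> phi (h x) i = c x \<otimes> phi (h x) i"
            unfolding c'_def using inv by simp
        qed
        also have "\<dots> = \<zero>" using s i by simp
        finally show "(\<Oplus>y\<in>h ` X. c' y \<otimes> phi y i) = \<zero>" .
      qed
      then have "\<forall>y\<in>h ` X. c' y = \<zero>" using L c'C unfolding lin_indep_over_def by blast
      then show "\<forall>x\<in>X. c x = \<zero>" unfolding c'_def using inv by force
    qed
  qed
qed
end

lemma transport:
  fixes E :: "'a set"
  assumes G: "good_matroid k l q E I"
  shows "\<exists>(E' :: nat set) I'. good_matroid k l q E' I' \<and> matroid_rank E' I' = matroid_rank E I"
proof -
  from G have MM: "matroid E I" "simple_matroid E I" "cosimple_matroid E I"
    "GF_representable q E I" "kl_uniform E I k l" unfolding good_matroid_def by auto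
  interpret M: mat E I using MM(1) by unfold_locales
  obtain f :: "'a \<Rightarrow> nat" and N where f: "f ` E = {i. i < N}" "inj_on f E"
    using finite_imp_inj_to_nat_seg[OF M.fin] by blast
  define E' where "E' = f ` E"
  define h where "h = the_inv_into E f"
  have bij: "bij_betw h E' E" unfolding h_def E'_def
    by (rule bij_betw_the_inv_into) (simp add: bij_betw_def f(2))
  have hE: "h x \<in> E" if "x \<in> E'" for x using bij that by (meson bij_betwE)
  have injh: "inj_on h E'" using bij by (simp add: bij_betw_def)
  have himg: "h ` E' = E" using bij by (simp add: bij_betw_def)
  define I' where "I' = (\<lambda>X. X \<subseteq> E' \<and> I (h ` X))"
  have cardh: "card (h ` X) = card X" if "X \<subseteq> E'" for X
    using injh that by (meson card_image inj_on_subset)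
  define pre where "pre Y = E' \<inter> h -` Y" for Y
  have pre: "h ` pre Y = Y" "pre Y \<subseteq> E'" if "Y \<subseteq> E" for Y
    unfolding pre_def using himg that by auto
  have mE': "matroid E' I'"
  proof -
    have a: "finite E'" unfolding E'_def using M.fin by simp
    have b: "I' {}" unfolding I'_def using M.indep_empty by simp
    have c: "\<forall>X. I' X \<longrightarrow> X \<subseteq> E'" unfolding I'_def by simp
    have d: "\<forall>X Y. I' Y \<and> X \<subseteq> Y \<longrightarrow> I' X"
    proof (intro allI impI)
      fix X Y assume "I' Y \<and> X \<subseteq> Y"
      then show "I' X" unfolding I'_def using M.indep_mono[of "h ` Y" "h ` X"] by blast
    qed
    have e: "\<forall>X Y. I' X \<and> I' Y \<and> card X < card Y \<longrightarrow> (\<exists>y\<in>Y - X. I' (insert y X))"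
    proof (intro allI impI)
      fix X Y assume h: "I' X \<and> I' Y \<and> card X < card Y"
      then have XY: "X \<subseteq> E'" "Y \<subseteq> E'" "I (h ` X)" "I (h ` Y)" unfolding I'_def by auto
      have "card (h ` X) < card (h ` Y)" using h cardh XY by simp
      then obtain y0 where y0: "y0 \<in> h ` Y - h ` X" "I (insert y0 (h ` X))"
        using M.aug_ax[OF XY(3,4)] by blast
      then obtain y where y: "y \<in> Y" "y0 = h y" by blast
      have yX: "y \<notin> X" using y y0(1) by blast
      have "insert y X \<subseteq> E'" using XY y by blast
      moreover have "h ` insert y X = insert y0 (h ` X)" using y by simp
      ultimately have "I' (insert y X)" unfolding I'_def using y0(2) by simp
      then show "\<exists>y\<in>Y - X. I' (insert y X)" using y yX by blast
    qed
    show ?thesis unfolding matroid_def using a b c d e by blast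
  qed
  interpret M': mat E' I' using mE' by unfold_locales
  have rk: "matroid_rank E' I' = matroid_rank E I"
  proof -
    have "card ` {X. X \<subseteq> E' \<and> I' X} = card ` {Y. Y \<subseteq> E \<and> I Y}"
    proof
      show "card ` {X. X \<subseteq> E' \<and> I' X} \<subseteq> card ` {Y. Y \<subseteq> E \<and> I Y}"
      proof
        fix m assume "m \<in> card ` {X. X \<subseteq> E' \<and> I' X}"
        then obtain X where X: "X \<subseteq> E'" "I' X" "m = card X" by blast
        then have "h ` X \<subseteq> E" "I (h ` X)" "m = card (h ` X)" using hE cardh unfolding I'_def by auto
        then show "m \<in> card ` {Y. Y \<subseteq> E \<and> I Y}" by blast
      qed
      show "card ` {Y. Y \<subseteq> E \<and> I Y} \<subseteq> card ` {X. X \<subseteq> E' \<and> I' X}"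
      proof
        fix m assume "m \<in> card ` {Y. Y \<subseteq> E \<and> I Y}"
        then obtain Y where Y: "Y \<subseteq> E" "I Y" "m = card Y" by blast
        then have "pre Y \<subseteq> E'" "I' (pre Y)" "m = card (pre Y)"
          using pre[OF Y(1)] cardh[of "pre Y"] unfolding I'_def by auto
        then show "m \<in> card ` {X. X \<subseteq> E' \<and> I' X}" by blast
      qed
    qed
    then show ?thesis unfolding matroid_rank_def by simp
  qed
  have sim: "simple_matroid E' I'" unfolding simple_matroid_def
  proof (intro ballI)
    fix x y assume xy: "x \<in> E'" "y \<in> E'"
    have "I {h x, h y}" using MM(2) hE[OF xy(1)] hE[OF xy(2)] unfolding simple_matroid_def by blast
    then show "I' {x, y}" unfolding I'_def using xy by simp
  qed
  have cos: "cosimple_matroid E' I'" unfolding cosimple_matroid_def simple_matroid_def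
  proof (intro ballI)
    fix x y assume xy: "x \<in> E'" "y \<in> E'"
    have "dual_indep E I {h x, h y}" using MM(3) hE[OF xy(1)] hE[OF xy(2)]
      unfolding cosimple_matroid_def simple_matroid_def by blast
    then obtain B where B: "basis_of I E B" "{h x, h y} \<inter> B = {}" unfolding dual_indep_def by blast
    have BE: "B \<subseteq> E" "I B" using B(1) unfolding basis_of_def by auto
    have "basis_of I' E' (pre B)" unfolding basis_of_def
    proof (intro conjI ballI)
      show "pre B \<subseteq> E'" using pre[OF BE(1)] by simp
      then show "I' (pre B)" unfolding I'_def using pre[OF BE(1)] BE(2) by simp
      fix z assume z: "z \<in> E' - pre B"
      show "\<not> I' (insert z (pre B))"
      proof
        assume "I' (insert z (pre B))"
        then have "I (insert (h z) B)" unfolding I'_def using pre[OF BE(1)] by simp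
        moreover have "h z \<in> E - B" using z hE unfolding pre_def by auto
        ultimately show False using B(1) unfolding basis_of_def by blast
      qed
    qed
    moreover have "{x, y} \<inter> pre B = {}" using B(2) unfolding pre_def by auto
    ultimately show "dual_indep E' I' {x, y}" unfolding dual_indep_def using xy by blast
  qed
  have unif: "kl_uniform E' I' k l" unfolding kl_uniform_def
  proof
    assume "has_Ukk_U0l_minor E' I' k l"
    then obtain C A L where w: "I' (C \<union> A)" "C \<inter> A = {}" "card A = k" "L \<subseteq> E' - (C \<union> A)" "card L = l"
       "\<forall>e\<in>L. \<not> I' (insert e C)"
      using M'.wit_iff unfolding M'.wit_def by blast
    have CAE: "C \<subseteq> E'" "A \<subseteq> E'" using w(1) unfolding I'_def by auto
    have LE: "L \<subseteq> E'" using w(4) by blast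
    have "M.wit k l (h ` C) (h ` A) (h ` L)" unfolding M.wit_def
    proof (intro conjI)
      show "I (h ` C \<union> h ` A)" using w(1) unfolding I'_def by (simp add: image_Un)
      show "h ` C \<inter> h ` A = {}" using w(2) CAE injh by (metis image_empty inj_on_image_Int)
      show "card (h ` A) = k" using cardh[OF CAE(2)] w(3) by simp
      show "card (h ` L) = l" using cardh[OF LE] w(5) by simp
      show "h ` L \<subseteq> E - (h ` C \<union> h ` A)"
      proof
        fix z assume "z \<in> h ` L"
        then obtain e where e: "e \<in> L" "z = h e" by blast
        have "e \<in> E'" "e \<notin> C" "e \<notin> A" using e w(4) by auto
        then have "h e \<notin> h ` C" "h e \<notin> h ` A" using CAE injh by (auto simp: inj_on_image_mem_iff)
        then show "z \<in> E - (h ` C \<union> h ` A)" using e hE \<open>e \<in> E'\<close> by auto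
      qed
      show "\<forall>e\<in>h ` L. \<not> I (insert e (h ` C))"
      proof
        fix z assume "z \<in> h ` L"
        then obtain e where e: "e \<in> L" "z = h e" by blast
        have "insert e C \<subseteq> E'" using e LE CAE by blast
        then show "\<not> I (insert z (h ` C))" using w(6) e unfolding I'_def by auto
      qed
    qed
    then show False using MM(5) M.wit_iff unfolding kl_uniform_def by blast
  qed
  have gf: "GF_representable q E' I'"
  proof -
    obtain R :: "nat ring" where R: "field R" "finite (carrier R)" "card (carrier R) = q"
      "representable_over R E I"
      using MM(4) unfolding GF_representable_def by blast
    obtain n phi where P: "\<forall>x\<in>E. \<forall>i<n. phi x i \<in> carrier R"
      "\<forall>X. X \<subseteq> E \<longrightarrow> (I X \<longleftrightarrow> lin_indep_over R n phi X)"
      using R(4) unfolding representable_over_def by blast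
    have 1: "\<forall>x\<in>E'. \<forall>i<n. phi (h x) i \<in> carrier R" using P(1) hE by blast
    have 2: "\<forall>X. X \<subseteq> E' \<longrightarrow> (I' X \<longleftrightarrow> lin_indep_over R n (\<lambda>x i. phi (h x) i) X)"
    proof (intro allI impI)
      fix X assume X: "X \<subseteq> E'"
      have hX: "h ` X \<subseteq> E" using X hE by blast
      have "lin_indep_over R n (\<lambda>x i. phi (h x) i) X \<longleftrightarrow> lin_indep_over R n phi (h ` X)"
        using field.LI_reindex[OF R(1) inj_on_subset[OF injh X]] 1 X by blast
      also have "\<dots> \<longleftrightarrow> I (h ` X)" using P(2) hX by blast
      finally show "I' X \<longleftrightarrow> lin_indep_over R n (\<lambda>x i. phi (h x) i) X" unfolding I'_def using X by simp
    qed
    have "representable_over R E' I'"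
      unfolding representable_over_def
      apply (rule exI[of _ n], rule exI[of _ "\<lambda>x i. phi (h x) i"])
      using 1 2 by blast
    then show ?thesis unfolding GF_representable_def using R(1-3) by blast
  qed
  have "good_matroid k l q E' I'" unfolding good_matroid_def using mE' sim cos gf unif by blast
  then show ?thesis using rk by blast
qed

lemma fmax_upper:
  fixes E :: "nat set"
  assumes "k \<ge> 1" "good_matroid k l q E I"
  shows "matroid_rank E I \<le> fmax k l q"
proof -
  have bdd: "bdd_above {matroid_rank E I | (E :: nat set) I. good_matroid k l q E I}"
  proof (rule bdd_aboveI)
    fix x assume "x \<in> {matroid_rank E I | (E :: nat set) I. good_matroid k l q E I}"
    then obtain E :: "nat set" and I where "x = matroid_rank E I" "good_matroid k l q E I" by blast
    then show "x \<le> q ^ (q ^ 2 * (l + k)) + k" using bound_all assms(1) by blast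
  qed
  have "matroid_rank E I \<in> {matroid_rank E I | (E :: nat set) I. good_matroid k l q E I}"
    using assms(2) by blast
  then show ?thesis unfolding fmax_def using bdd by (rule cSup_upper)
qed

theorem proposition2p3:
  fixes k l q :: nat
  assumes "k \<ge> 1" and "l \<ge> 1" and "prime_power q"
  shows "bdd_above {matroid_rank E I | (E :: nat set) I. good_matroid k l q E I}
    \<and> (\<forall>(E :: 'a set) I. good_matroid k l q E I \<longrightarrow> matroid_rank E I \<le> fmax k l q)
    \<and> (k \<ge> 2 \<longrightarrow> fmax k l q \<le> max (fmax (k - 1) (l + 1) q) (fmax 1 l q + (k - 1)))"
proof (intro conjI allI impI)
  show "bdd_above {matroid_rank E I | (E :: nat set) I. good_matroid k l q E I}"
  proof (rule bdd_aboveI)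
    fix x assume "x \<in> {matroid_rank E I | (E :: nat set) I. good_matroid k l q E I}"
    then obtain E :: "nat set" and I where "x = matroid_rank E I" "good_matroid k l q E I" by blast
    then show "x \<le> q ^ (q ^ 2 * (l + k)) + k" using bound_all assms(1) by blast
  qed
next
  fix E :: "'a set" and I
  assume "good_matroid k l q E I"
  then obtain E' :: "nat set" and I' where "good_matroid k l q E' I'" "matroid_rank E' I' = matroid_rank E I"
    using transport by blast
  then show "matroid_rank E I \<le> fmax k l q" using fmax_upper[OF assms(1)] by metis
next
  assume k2: "k \<ge> 2"
  let ?S = "{matroid_rank E I | (E :: nat set) I. good_matroid k l q E I}"
  show "fmax k l q \<le> max (fmax (k - 1) (l + 1) q) (fmax 1 l q + (k - 1))"
  proof (cases "?S = {}")
    case True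
    then show ?thesis unfolding fmax_def by simp
  next
    case False
    have "Sup ?S \<le> max (fmax (k - 1) (l + 1) q) (fmax 1 l q + (k - 1))"
    proof (rule cSup_least[OF False])
      fix x assume "x \<in> ?S"
      then obtain E :: "nat set" and I where x: "x = matroid_rank E I" "good_matroid k l q E I" by blast
      show "x \<le> max (fmax (k - 1) (l + 1) q) (fmax 1 l q + (k - 1))"
      proof (cases "kl_uniform E I (k - 1) (l + 1)")
        case True
        then have "good_matroid (k - 1) (l + 1) q E I" using x(2) unfolding good_matroid_def by blast
        then have "x \<le> fmax (k - 1) (l + 1) q" using fmax_upper[of "k - 1"] k2 x(1) by simp
        then show ?thesis by simp
      next
        case False
        obtain Z where Z: "Z \<subseteq> E" "good_matroid 1 l q Z (\<lambda>X. I X \<and> X \<subseteq> Z)"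
          "matroid_rank E I \<le> matroid_rank Z (\<lambda>X. I X \<and> X \<subseteq> Z) + (k - 1)"
          using P3_good[OF x(2) k2 False] by blast
        have "matroid_rank Z (\<lambda>X. I X \<and> X \<subseteq> Z) \<le> fmax 1 l q"
          using fmax_upper[OF _ Z(2)] by simp
        then have "x \<le> fmax 1 l q + (k - 1)" using Z(3) x(1) by simp
        then show ?thesis by simp
      qed
    qed
    then show ?thesis unfolding fmax_def .
  qed
qed

end
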